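(* For every integer $d\ge1$ there is a constant $C>0$ depending only on $d$ such that the following holds. Let $L\in\mathcal A_d$, $\eta>0$, $m\ge d+2$, and let $z_1,\dots,z_m\in B(L,\eta)$. Then there exist distinct indices $i_1,\dots,i_{d+1}\in\{1,\dots,m\}$ and $H\in\mathcal A_d$ containing $z_{i_1},\dots,z_{i_{d+1}}$ (so that $H$ is their affine hull whenever these $d+1$ points are affinely independent) such that $z_1,\dots,z_m\in B(H,C\eta)$.
   Context: $\mathcal A_d$ denotes the set of $d$-dimensional affine subspaces of $\mathbb R^D$. For $A\subset\mathbb R^D$ and $r>0$, $B(A,r)=\{y\in\mathbb R^D:\inf_{a\in A}\|y-a\|<r\}$ (Euclidean norm). *)

theory Defs
  imports "HOL-Analysis.Analysis"
begin

text \<open>Since the constant C must depend only on d (not on the ambient dimension D),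
  D is an ordinary natural number quantified inside the statement.  Points of R^D are
  represented as functions nat => real vanishing at all coordinates i >= D.\<close>

definition RD :: "nat \<Rightarrow> (nat \<Rightarrow> real) set" where
  "RD D = {x. \<forall>i\<ge>D. x i = 0}"

definition edist :: "nat \<Rightarrow> (nat \<Rightarrow> real) \<Rightarrow> (nat \<Rightarrow> real) \<Rightarrow> real" where
  "edist D x y = sqrt (\<Sum>i<D. (x i - y i)^2)"

definition lin_indep :: "nat \<Rightarrow> (nat \<Rightarrow> nat \<Rightarrow> real) \<Rightarrow> bool" where
  "lin_indep d v = (\<forall>t::nat \<Rightarrow> real. (\<forall>i. (\<Sum>j<d. t j * v j i) = 0) \<longrightarrow> (\<forall>j<d. t j = 0))"

definition aff_subspaces :: "nat \<Rightarrow> nat \<Rightarrow> (nat \<Rightarrow> real) set set" where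
  "aff_subspaces D d = {A. \<exists>p v. p \<in> RD D \<and> (\<forall>j<d. v j \<in> RD D) \<and> lin_indep d v \<and>
      A = {x. \<exists>t::nat \<Rightarrow> real. x = (\<lambda>i. p i + (\<Sum>j<d. t j * v j i))}}"

definition nbhd :: "nat \<Rightarrow> (nat \<Rightarrow> real) set \<Rightarrow> real \<Rightarrow> (nat \<Rightarrow> real) set" where
  "nbhd D A r = {y \<in> RD D. (INF a\<in>A. edist D y a) < r}"

end

theory Submission imports Defs "HOL-Library.Function_Algebras" "Jordan_Normal_Form.Determinant" "Jordan_Normal_Form.Char_Poly" begin
no_notation Finite_Cartesian_Product.vec_nth (infixl "$" 90)

lemma sum_fun_app: "(\<Sum>x\<in>A. f x) (i::'c) = (\<Sum>x\<in>A. (f x i :: real))"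
  by (induction A rule: infinite_finite_induct) auto

interpretation FV: vector_space "\<lambda>(c::real) (f::nat\<Rightarrow>real). (\<lambda>i. c * f i)"
  by unfold_locales (auto simp: fun_eq_iff algebra_simps)

lemma FV_sum_app: "(\<Sum>x\<in>A. (\<lambda>i. u x * (x::nat\<Rightarrow>real) i)) i = (\<Sum>x\<in>A. u x * x i)"
  by (rule sum_fun_app)

lemma indep_set_of_lin_indep:
  fixes X :: "nat \<Rightarrow> nat \<Rightarrow> real"
  assumes "lin_indep d X"
  shows "inj_on X {..<d}" "FV.independent (X ` {..<d})"
proof -
  show inj: "inj_on X {..<d}"
  proof (rule inj_onI, rule ccontr)
    fix a b assume ab: "a \<in> {..<d}" "b \<in> {..<d}" "X a = X b" "a \<noteq> b"
    define t where "t = (\<lambda>j. if j = a then (1::real) else if j = b then -1 else 0)"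
    have "\<forall>i. (\<Sum>j<d. t j * X j i) = 0"
    proof
      fix i
      have "(\<Sum>j<d. t j * X j i) = (\<Sum>j\<in>{a,b}. t j * X j i)"
        by (rule sum.mono_neutral_right) (use ab in \<open>auto simp: t_def\<close>)
      also have "\<dots> = 0" using ab by (simp add: t_def)
      finally show "(\<Sum>j<d. t j * X j i) = 0" .
    qed
    with assms have "t a = 0" using ab unfolding lin_indep_def by blast
    then show False by (simp add: t_def)
  qed
  show "FV.independent (X ` {..<d})"
  proof
    assume "FV.dependent (X ` {..<d})"
    then obtain u where u: "\<exists>x\<in>X ` {..<d}. u x \<noteq> 0" "(\<Sum>x\<in>X ` {..<d}. (\<lambda>i. u x * x i)) = 0"
      by (subst (asm) FV.dependent_finite) auto
    have "\<forall>i. (\<Sum>j<d. u (X j) * X j i) = 0"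
    proof
      fix i
      have "(\<Sum>j<d. u (X j) * X j i) = (\<Sum>x\<in>X ` {..<d}. u x * x i)"
        by (subst sum.reindex[OF inj]) simp
      also have "\<dots> = (\<Sum>x\<in>X ` {..<d}. (\<lambda>i. u x * x i)) i" by (simp add: sum_fun_app)
      also have "\<dots> = 0" using u(2) by simp
      finally show "(\<Sum>j<d. u (X j) * X j i) = 0" .
    qed
    hence "\<forall>j<d. u (X j) = 0" using assms[unfolded lin_indep_def, rule_format, of "\<lambda>j. u (X j)"] by blast
    with u(1) show False by auto
  qed
qed

lemma lin_indep_of_indep:
  fixes h :: "nat \<Rightarrow> nat \<Rightarrow> real"
  assumes "bij_betw h {..<d} B" "FV.independent B"
  shows "lin_indep d h"
  unfolding lin_indep_def
proof (intro allI impI)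
  fix t :: "nat \<Rightarrow> real" and j assume t: "\<forall>i. (\<Sum>j<d. t j * h j i) = 0" and j: "j < d"
  have inj: "inj_on h {..<d}" and Bim: "h ` {..<d} = B" using assms(1) by (auto simp: bij_betw_def)
  have fin: "finite B" using Bim by auto
  define u where "u = (\<lambda>x. t (inv_into {..<d} h x))"
  have uh: "u (h k) = t k" if "k < d" for k using inj that by (simp add: u_def)
  have "(\<Sum>x\<in>B. (\<lambda>i. u x * x i)) = 0"
  proof
    fix i
    have "(\<Sum>x\<in>B. (\<lambda>i. u x * x i)) i = (\<Sum>x\<in>B. u x * x i)" by (simp add: sum_fun_app)
    also have "\<dots> = (\<Sum>k<d. u (h k) * h k i)" unfolding Bim[symmetric]
      by (subst sum.reindex[OF inj]) simp
    also have "\<dots> = (\<Sum>k<d. t k * h k i)" by (rule sum.cong) (auto simp: uh)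
    also have "\<dots> = 0" using t by simp
    finally show "(\<Sum>x\<in>B. (\<lambda>i. u x * x i)) i = 0 i" by simp
  qed
  with assms(2) fin have "\<forall>x\<in>B. u x = 0" using FV.dependent_finite by blast
  then have "u (h j) = 0" using Bim j by auto
  then show "t j = 0" using uh j by simp
qed

lemma extend_indep:
  fixes w v :: "nat \<Rightarrow> nat \<Rightarrow> real"
  assumes v: "lin_indep d v" "\<forall>j<d. v j \<in> RD D" and w: "\<forall>j<d. w j \<in> RD D"
  shows "\<exists>X. (\<forall>l<d. X l \<in> RD D) \<and> lin_indep d X \<and> (\<forall>j<d. \<exists>c. w j = (\<lambda>i. \<Sum>l<d. c l * X l i))"
proof -
  define S0 where "S0 = w ` {..<d}"
  define V0 where "V0 = v ` {..<d}"
  obtain B0 where B0: "B0 \<subseteq> S0" "FV.independent B0" "S0 \<subseteq> FV.span B0"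
    using FV.maximal_independent_subset by blast
  obtain B where B: "B0 \<subseteq> B" "B \<subseteq> B0 \<union> V0" "FV.independent B" "B0 \<union> V0 \<subseteq> FV.span B"
    using FV.maximal_independent_subset_extend[of B0 "B0 \<union> V0"] B0(2) by blast
  have finB: "finite B" using B(2) B0(1) unfolding S0_def V0_def by (meson finite_UnI finite_imageI finite_lessThan finite_subset)
  have cV0: "card V0 = d" using indep_set_of_lin_indep[OF v(1)] unfolding V0_def by (simp add: card_image)
  have "card V0 \<le> card B"
    using FV.independent_span_bound[OF finB, of V0] indep_set_of_lin_indep(2)[OF v(1)] B(4)
    unfolding V0_def by auto
  hence dB: "d \<le> card B" using cV0 by simp
  have finB0: "finite B0" using B(1) finB finite_subset by blast
  have cB0: "card B0 \<le> d"
    using card_mono[OF _ B0(1)] card_image_le[of "{..<d}" w] unfolding S0_def by fastforce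
  have "card (B - B0) = card B - card B0" using B(1) finB0 by (simp add: card_Diff_subset)
  hence "d - card B0 \<le> card (B - B0)" using dB by simp
  then obtain B1 where B1: "B1 \<subseteq> B - B0" "card B1 = d - card B0"
    by (rule obtain_subset_with_card_n)
  define B' where "B' = B0 \<union> B1"
  have finB': "finite B'" using B1(1) finB finB0 B'_def finite_subset by auto
  have cB': "card B' = d" unfolding B'_def using B1 finB0 finB cB0
    by (subst card_Un_disjoint) (auto intro: finite_subset)
  have B'B: "B' \<subseteq> B" using B1 B(1) unfolding B'_def by auto
  have indB': "FV.independent B'" using FV.independent_mono[OF B(3) B'B] .
  obtain h where h: "bij_betw h {0..<d} B'" using ex_bij_betw_nat_finite[OF finB'] cB' by auto
  have h': "bij_betw h {..<d} B'" using h by (simp add: lessThan_atLeast0)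
  have inj: "inj_on h {..<d}" and Bim: "h ` {..<d} = B'" using h' by (auto simp: bij_betw_def)
  show ?thesis
  proof (rule exI[of _ h], intro conjI allI impI)
    fix l assume "l < d"
    hence "h l \<in> B0 \<union> V0" using Bim B'B B(2) by auto
    thus "h l \<in> RD D" using B0(1) v(2) w unfolding S0_def V0_def by auto
  next
    show "lin_indep d h" by (rule lin_indep_of_indep[OF h' indB'])
  next
    fix j assume j: "j < d"
    have "w j \<in> FV.span B'"
      using B0(3) FV.span_mono[of B0 B'] j unfolding S0_def B'_def by auto
    then obtain u where u: "(\<Sum>x\<in>B'. (\<lambda>i. u x * x i)) = w j"
      using FV.span_finite[OF finB'] by auto
    show "\<exists>c. w j = (\<lambda>i. \<Sum>l<d. c l * h l i)"
    proof (rule exI[of _ "\<lambda>l. u (h l)"], rule ext)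
      fix i
      have "w j i = (\<Sum>x\<in>B'. u x * x i)" using u[symmetric] by (simp add: sum_fun_app)
      also have "\<dots> = (\<Sum>l<d. u (h l) * h l i)" unfolding Bim[symmetric]
        by (subst sum.reindex[OF inj]) simp
      finally show "w j i = (\<Sum>l<d. u (h l) * h l i)" .
    qed
  qed
qed

lemma L2_diff_le: "L2_set (\<lambda>i. f i - g i) A \<le> L2_set f A + L2_set g A"
proof -
  have "L2_set (\<lambda>i. f i - g i) A = L2_set (\<lambda>i. f i + (- g i)) A" by simp
  also have "\<dots> \<le> L2_set f A + L2_set (\<lambda>i. - g i) A" by (rule L2_set_triangle_ineq)
  also have "L2_set (\<lambda>i. - g i) A = L2_set g A" by (simp add: L2_set_def)
  finally show ?thesis .
qed

lemma L2_sum_le: "L2_set (\<lambda>i. \<Sum>j\<in>J. h j i) A \<le> (\<Sum>j\<in>J. L2_set (h j) A)"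
proof (induction J rule: infinite_finite_induct)
  case (infinite J) then show ?case by (simp add: L2_set_def)
next
  case empty then show ?case by (simp add: L2_set_def)
next
  case (insert x F)
  have "L2_set (\<lambda>i. \<Sum>j\<in>insert x F. h j i) A = L2_set (\<lambda>i. h x i + (\<Sum>j\<in>F. h j i)) A"
    using insert by simp
  also have "\<dots> \<le> L2_set (h x) A + L2_set (\<lambda>i. \<Sum>j\<in>F. h j i) A" by (rule L2_set_triangle_ineq)
  also have "\<dots> \<le> L2_set (h x) A + (\<Sum>j\<in>F. L2_set (h j) A)" using insert by simp
  finally show ?case using insert by simp
qed

lemma L2_scale: "L2_set (\<lambda>i. c * f i) A = \<bar>c\<bar> * L2_set f A"
proof -
  have "L2_set (\<lambda>i. c * f i) A = L2_set (\<lambda>i. \<bar>c\<bar> * f i) A"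
    by (simp add: L2_set_def power_mult_distrib)
  also have "\<dots> = \<bar>c\<bar> * L2_set f A" by (rule L2_set_right_distrib[symmetric]) simp
  finally show ?thesis .
qed

lemma L2_combo:
  "L2_set (\<lambda>l. a l - b l - (\<Sum>j<d. x j * (c j l - b l))) A
     \<le> L2_set a A + L2_set b A + (\<Sum>j<d. \<bar>x j\<bar> * (L2_set (c j) A + L2_set b A))"
proof -
  have "L2_set (\<lambda>l. a l - b l - (\<Sum>j<d. x j * (c j l - b l))) A
      \<le> L2_set (\<lambda>l. a l - b l) A + L2_set (\<lambda>l. \<Sum>j<d. x j * (c j l - b l)) A" by (rule L2_diff_le)
  also have "\<dots> \<le> (L2_set a A + L2_set b A) + (\<Sum>j<d. L2_set (\<lambda>l. x j * (c j l - b l)) A)"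
    by (intro add_mono L2_diff_le L2_sum_le)
  also have "(\<Sum>j<d. L2_set (\<lambda>l. x j * (c j l - b l)) A) \<le> (\<Sum>j<d. \<bar>x j\<bar> * (L2_set (c j) A + L2_set b A))"
    by (intro sum_mono) (simp add: L2_scale L2_diff_le mult_left_mono)
  finally show ?thesis by simp
qed

lemma solve_cramer:
  fixes A :: "real mat"
  assumes A: "A \<in> carrier_mat n n" and dA: "Determinant.det A \<noteq> 0" and b: "b \<in> carrier_vec n"
  shows "\<exists>x \<in> carrier_vec n. A *\<^sub>v x = b \<and> (\<forall>k<n. Determinant.det (replace_col A b k) = x $ k * Determinant.det A)"
proof -
  define x where "x = (1 / Determinant.det A) \<cdot>\<^sub>v (adj_mat A *\<^sub>v b)"
  have adjA: "adj_mat A \<in> carrier_mat n n" using adj_mat(1)[OF A] .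
  have xc: "x \<in> carrier_vec n" using adjA b by (simp add: x_def)
  have "A *\<^sub>v x = (1 / Determinant.det A) \<cdot>\<^sub>v (A *\<^sub>v (adj_mat A *\<^sub>v b))"
    unfolding x_def by (rule mult_mat_vec[OF A]) (use adjA b in auto)
  also have "A *\<^sub>v (adj_mat A *\<^sub>v b) = (A * adj_mat A) *\<^sub>v b" using assoc_mult_mat_vec[OF A adjA b] by simp
  also have "A * adj_mat A = Determinant.det A \<cdot>\<^sub>m 1\<^sub>m n" by (rule adj_mat(2)[OF A])
  also have "(1 / Determinant.det A) \<cdot>\<^sub>v ((Determinant.det A \<cdot>\<^sub>m 1\<^sub>m n) *\<^sub>v b) = b"
  proof (rule eq_vecI)
    fix i assume "i < dim_vec b"
    hence i: "i < n" using b by simp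
    have "((Determinant.det A \<cdot>\<^sub>m 1\<^sub>m n) *\<^sub>v b) $ i = (\<Sum>j\<in>{0..<n}. Determinant.det A * (if j = i then 1 else 0) * b $ j)"
      using i b by (auto simp: scalar_prod_def)
    also have "\<dots> = (\<Sum>j\<in>{0..<n}. (if i = j then Determinant.det A * b $ j else 0))"
      by (rule sum.cong) auto
    also have "\<dots> = Determinant.det A * b $ i" using i by (simp add: sum.delta sum.delta')
    finally show "((1 / Determinant.det A) \<cdot>\<^sub>v ((Determinant.det A \<cdot>\<^sub>m 1\<^sub>m n) *\<^sub>v b)) $ i = b $ i"
      using i dA by simp
  qed (use b in simp)
  finally have Ax: "A *\<^sub>v x = b" .
  show ?thesis using cramer_lemma_mat[OF A xc] Ax xc by auto
qed

lemma perturb: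
  fixes A0 :: "real mat"
  assumes A0: "A0 \<in> carrier_mat n n" and "\<delta> > 0"
  shows "\<exists>s. 0 < s \<and> s < \<delta> \<and> Determinant.det (A0 + s \<cdot>\<^sub>m 1\<^sub>m n) \<noteq> 0"
proof -
  define R where "R = {x. poly (char_poly A0) x = 0}"
  have "char_poly A0 \<noteq> 0" using degree_monic_char_poly[OF A0] by auto
  hence finR: "finite R" unfolding R_def by (rule poly_roots_finite)
  have "infinite {0<..<\<delta>}" using assms(2) by simp
  hence "infinite ({0<..<\<delta>} - uminus ` R)" using finR by (simp add: Diff_infinite_finite)
  then obtain s where "s \<in> {0<..<\<delta>} - uminus ` R" using infinite_imp_nonempty by blast
  hence s: "s \<in> {0<..<\<delta>}" "s \<notin> uminus ` R" by auto
  have "- s \<notin> R" using s(2) by (metis image_eqI minus_minus)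
  hence "\<not> eigenvalue A0 (-s)" using eigenvalue_root_char_poly[OF A0] unfolding R_def by simp
  hence "Determinant.det (char_matrix A0 (-s)) \<noteq> 0" using eigenvalue_det[OF A0] by simp
  moreover have "char_matrix A0 (-s) = A0 + s \<cdot>\<^sub>m 1\<^sub>m n" using A0 by (simp add: char_matrix_def)
  ultimately show ?thesis using s(1) by auto
qed

theorem mainTheorem2:
  fixes d :: nat
  assumes "d \<ge> 1"
  shows "\<exists>C>0. \<forall>(D::nat) L (\<eta>::real) (m::nat) (z::nat \<Rightarrow> nat \<Rightarrow> real).
           L \<in> aff_subspaces D d \<longrightarrow> \<eta> > 0 \<longrightarrow> m \<ge> d + 2 \<longrightarrow>
           (\<forall>k\<in>{1..m}. z k \<in> nbhd D L \<eta>) \<longrightarrow>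
           (\<exists>I H. I \<subseteq> {1..m} \<and> card I = d + 1 \<and> H \<in> aff_subspaces D d \<and>
                  (\<forall>k\<in>I. z k \<in> H) \<and> (\<forall>k\<in>{1..m}. z k \<in> nbhd D H (C * \<eta>)))"
proof -
  define C :: real where "C = 2 * real d + 3"
  have Cpos: "C > 0" by (simp add: C_def)
  show ?thesis
  proof (rule exI[of _ C], rule conjI[OF Cpos], intro allI impI)
    fix D L \<eta> m and z :: "nat \<Rightarrow> nat \<Rightarrow> real"
    assume L: "L \<in> aff_subspaces D d" and eta: "\<eta> > 0" and m: "m \<ge> d + 2"
      and zk: "\<forall>k\<in>{1..m}. z k \<in> nbhd D L \<eta>"
    obtain p v where p: "p \<in> RD D" and v: "\<forall>j<d. v j \<in> RD D" "lin_indep d v"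
      and Leq: "L = {x. \<exists>t. x = (\<lambda>i. p i + (\<Sum>j<d. t j * v j i))}"
      using L unfolding aff_subspaces_def by blast
    define pt where "pt = (\<lambda>t::nat\<Rightarrow>real. (\<lambda>i. p i + (\<Sum>j<d. t j * v j i)))"
    have ptL: "pt t \<in> L" for t using Leq pt_def by auto
    have zRD: "z k \<in> RD D" if "k \<in> {1..m}" for k using zk that unfolding nbhd_def by auto
    have edL2: "edist D x y = L2_set (\<lambda>i. x i - y i) {..<D}" for x y by (simp add: edist_def L2_set_def)
    have ex_near: "\<exists>t. edist D (z k) (pt t) < \<eta>" if k: "k \<in> {1..m}" for k
    proof -
      have "(INF a\<in>L. edist D (z k) a) < \<eta>" using zk k unfolding nbhd_def by auto
      moreover have "L \<noteq> {}" using ptL by auto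
      ultimately obtain a where "a \<in> L" "edist D (z k) a < \<eta>"
        using cInf_lessD[of "(\<lambda>a. edist D (z k) a) ` L" \<eta>] by auto
      then show ?thesis using Leq pt_def by auto
    qed
    then obtain T where T: "\<forall>k\<in>{1..m}. edist D (z k) (pt (T k)) < \<eta>" by metis
    define nv where "nv j = L2_set (v j) {..<D}" for j
    define slack where "slack k = \<eta> - edist D (z k) (pt (T k))" for k
    define \<delta> where "\<delta> = Min ((\<lambda>k. slack k / (nv (k - 1) + 1)) ` {1..d})"
    have nv0: "nv j \<ge> 0" for j by (simp add: nv_def)
    have slpos: "slack k > 0" if "k \<in> {1..d}" for k using T that m by (auto simp: slack_def)
    have \<delta>pos: "\<delta> > 0" unfolding \<delta>_def using assms slpos nv0
      by (subst Min_gr_iff) (auto intro!: divide_pos_pos add_nonneg_pos)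
    have \<delta>le: "\<delta> \<le> slack k / (nv (k - 1) + 1)" if "k \<in> {1..d}" for k
      unfolding \<delta>_def using that by (intro Min_le) auto
    define A0 where "A0 = mat d d (\<lambda>(i,j). T (j+1) i - T (d+1) i)"
    obtain s where s: "0 < s" "s < \<delta>" "Determinant.det (A0 + s \<cdot>\<^sub>m 1\<^sub>m d) \<noteq> 0"
      using perturb[of A0 d \<delta>] \<delta>pos by (auto simp: A0_def)
    define U where "U k = (if k \<in> {1..d} then (\<lambda>i. T k i + (if i = k - 1 then s else 0)) else T k)" for k
    have UT: "edist D (z k) (pt (U k)) < \<eta>" if k: "k \<in> {1..m}" for k
    proof (cases "k \<in> {1..d}")
      case False then show ?thesis using T k by (simp add: U_def)
    next
      case True
      have ptU: "pt (U k) = (\<lambda>i. pt (T k) i + s * v (k-1) i)"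
      proof
        fix i
        have "(\<Sum>j<d. (T k j + (if j = k-1 then s else 0)) * v j i)
             = (\<Sum>j<d. T k j * v j i + (if j = k-1 then s * v j i else 0))"
          by (rule sum.cong) (auto simp: distrib_right)
        also have "\<dots> = (\<Sum>j<d. T k j * v j i) + (\<Sum>j<d. (if j = k-1 then s * v j i else 0))"
          by (rule sum.distrib)
        also have "(\<Sum>j<d. (if j = k-1 then s * v j i else 0)) = s * v (k-1) i"
        proof -
          have "k - 1 \<in> {..<d}" using True by auto
          thus ?thesis by (simp add: sum.delta)
        qed
        finally show "pt (U k) i = pt (T k) i + s * v (k-1) i" using True by (simp add: U_def pt_def)
      qed
      have "edist D (z k) (pt (U k)) = L2_set (\<lambda>i. (z k i - pt (T k) i) - s * v (k-1) i) {..<D}"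
        using edL2 ptU by (simp add: algebra_simps)
      also have "\<dots> \<le> L2_set (\<lambda>i. z k i - pt (T k) i) {..<D} + L2_set (\<lambda>i. s * v (k-1) i) {..<D}"
        by (rule L2_diff_le)
      also have "L2_set (\<lambda>i. s * v (k-1) i) {..<D} = s * nv (k-1)" using s by (simp add: L2_scale nv_def)
      also have "s * nv (k-1) < slack k"
      proof -
        have "s < slack k / (nv (k - 1) + 1)" using s(2) \<delta>le[OF True] by simp
        hence "s * (nv (k-1) + 1) < slack k" using nv0[of "k-1"] by (simp add: pos_less_divide_eq)
        moreover have "s * nv (k-1) \<le> s * (nv (k-1) + 1)" using s(1) by simp
        ultimately show ?thesis by linarith
      qed
      finally show ?thesis using edL2 by (simp add: slack_def)
    qed
    define F where "F = {f \<in> {0..d} \<rightarrow>\<^sub>E {1..m}. inj_on f {0..d}}"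
    define M where "M f = mat d d (\<lambda>(i,j). U (f j) i - U (f d) i)" for f
    define g where "g f = \<bar>Determinant.det (M f)\<bar>" for f
    have finF: "finite F" unfolding F_def by (rule finite_subset[of _ "{0..d} \<rightarrow>\<^sub>E {1..m}"]) (auto intro: finite_PiE)
    define f0 where "f0 = (\<lambda>j\<in>{0..d}. j + 1)"
    have f0F: "f0 \<in> F" using m by (auto simp: F_def f0_def inj_on_def)
    have Mf0: "M f0 = A0 + s \<cdot>\<^sub>m 1\<^sub>m d"
      by (rule eq_matI) (auto simp: M_def f0_def A0_def U_def)
    have g0: "g f0 > 0" using s(3) Mf0 by (simp add: g_def)
    obtain fs where fsF: "fs \<in> F" and fsmax: "\<forall>f\<in>F. g f \<le> g fs"
    proof -
      have ne: "g ` F \<noteq> {}" and fin: "finite (g ` F)" using f0F finF by auto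
      obtain fs where "fs \<in> F" "g fs = Max (g ` F)" using Max_in[OF fin ne] by auto
      then show ?thesis using that Max_ge[OF fin] by auto
    qed
    have gfs: "g fs > 0" using fsmax f0F g0 by force
    have dA: "Determinant.det (M fs) \<noteq> 0" using gfs by (simp add: g_def)
    have fs_range: "fs j \<in> {1..m}" if "j \<in> {0..d}" for j using fsF that by (auto simp: F_def)
    have fs_inj: "inj_on fs {0..d}" using fsF by (simp add: F_def)
    define I where "I = fs ` {0..d}"
    define w where "w j = (\<lambda>i. z (fs j) i - z (fs d) i)" for j
    have zfsd: "z (fs d) \<in> RD D" using zRD fs_range by auto
    have wRD: "\<forall>j<d. w j \<in> RD D" using zRD fs_range by (auto simp: w_def RD_def)
    obtain X where X: "\<forall>l<d. X l \<in> RD D" "lin_indep d X" and cex: "\<forall>j<d. \<exists>c. w j = (\<lambda>i. \<Sum>l<d. c l * X l i)"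
      using extend_indep[OF v(2) v(1) wRD] by blast
    obtain c where c: "\<forall>j<d. w j = (\<lambda>i. \<Sum>l<d. c j l * X l i)" using cex by metis
    define H where "H = {x. \<exists>t. x = (\<lambda>i. z (fs d) i + (\<Sum>l<d. t l * X l i))}"
    have HA: "H \<in> aff_subspaces D d" unfolding aff_subspaces_def H_def using zfsd X by blast
    have zfsH: "z (fs j) \<in> H" if "j \<in> {0..d}" for j
    proof (cases "j = d")
      case True then show ?thesis unfolding H_def by (intro CollectI exI[of _ "\<lambda>_. 0"]) simp
    next
      case False
      hence "j < d" using that by auto
      hence "w j = (\<lambda>i. \<Sum>l<d. c j l * X l i)" using c by blast
      hence "\<forall>i. z (fs j) i - z (fs d) i = (\<Sum>l<d. c j l * X l i)" by (simp add: w_def fun_eq_iff)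
      hence "z (fs j) = (\<lambda>i. z (fs d) i + (\<Sum>l<d. c j l * X l i))"
        by (auto simp: fun_eq_iff algebra_simps)
      then show ?thesis unfolding H_def by blast
    qed
    have nb: "x \<in> nbhd D H r" if "x \<in> RD D" "y \<in> H" "edist D x y < r" for x y r
    proof -
      have "bdd_below ((\<lambda>a. edist D x a) ` H)" by (rule bdd_belowI[of _ 0]) (auto simp: edL2)
      hence "(INF a\<in>H. edist D x a) \<le> edist D x y" using that(2) by (rule cINF_lower)
      thus ?thesis using that unfolding nbhd_def by auto
    qed
    show "\<exists>I H. I \<subseteq> {1..m} \<and> card I = d + 1 \<and> H \<in> aff_subspaces D d \<and>
                  (\<forall>k\<in>I. z k \<in> H) \<and> (\<forall>k\<in>{1..m}. z k \<in> nbhd D H (C * \<eta>))"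
    proof (rule exI[of _ I], rule exI[of _ H], intro conjI ballI)
      show "I \<subseteq> {1..m}" using fs_range by (auto simp: I_def)
      show "card I = d + 1" using card_image[OF fs_inj] by (simp add: I_def)
      show "H \<in> aff_subspaces D d" by (rule HA)
      fix k assume "k \<in> I" then show "z k \<in> H" using zfsH by (auto simp: I_def)
    next
      fix k assume k: "k \<in> {1..m}"
      show "z k \<in> nbhd D H (C * \<eta>)"
      proof (cases "k \<in> I")
        case True
        hence "z k \<in> H" using zfsH by (auto simp: I_def)
        moreover have "edist D (z k) (z k) < C * \<eta>" using Cpos eta by (simp add: edist_def)
        ultimately show ?thesis using nb zRD[OF k] by blast
      next
        case False
        define b where "b = vec d (\<lambda>i. U k i - U (fs d) i)"
        obtain x where xc: "x \<in> carrier_vec d" and Ax: "M fs *\<^sub>v x = b"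
          and cr: "\<forall>j<d. Determinant.det (replace_col (M fs) b j) = x $ j * Determinant.det (M fs)"
          using solve_cramer[of "M fs" d b] dA by (auto simp: M_def b_def)
        have xb: "\<bar>x $ j\<bar> \<le> 1" if j: "j < d" for j
        proof -
          define f' where "f' = fs(j := k)"
          have "f' \<in> F" using fsF k False j
            by (auto simp: F_def f'_def PiE_iff I_def extensional_def intro!: inj_on_fun_updI)
          moreover have "replace_col (M fs) b j = M f'"
            using j by (intro eq_matI) (auto simp: replace_col_def M_def b_def f'_def)
          hence "Determinant.det (M f') = x $ j * Determinant.det (M fs)" using cr j by metis
          hence "g f' = \<bar>x $ j\<bar> * g fs" by (simp add: g_def abs_mult)
          ultimately have "\<bar>x $ j\<bar> * g fs \<le> 1 * g fs" using fsmax by auto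
          thus ?thesis using gfs by (simp add: mult_le_cancel_right_pos)
        qed
        define xx where "xx j = x $ j" for j
        have lin: "U k i - U (fs d) i = (\<Sum>j<d. xx j * (U (fs j) i - U (fs d) i))" if i: "i < d" for i
        proof -
          have "(M fs *\<^sub>v x) $ i = b $ i" using Ax by simp
          hence "(\<Sum>j\<in>{0..<d}. (U (fs j) i - U (fs d) i) * x $ j) = U k i - U (fs d) i"
            using i xc by (simp add: M_def b_def scalar_prod_def)
          thus ?thesis by (simp add: xx_def lessThan_atLeast0 mult.commute)
        qed
        define y where "y = (\<lambda>l. z (fs d) l + (\<Sum>j<d. xx j * w j l))"
        have yH: "y \<in> H"
        proof -
          have "(\<Sum>j<d. xx j * w j l) = (\<Sum>l'<d. (\<Sum>j<d. xx j * c j l') * X l' l)" for l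
          proof -
            have "(\<Sum>j<d. xx j * w j l) = (\<Sum>j<d. xx j * (\<Sum>l'<d. c j l' * X l' l))"
              using c by (intro sum.cong) auto
            also have "\<dots> = (\<Sum>j<d. \<Sum>l'<d. xx j * c j l' * X l' l)"
              by (simp add: sum_distrib_left mult.assoc)
            also have "\<dots> = (\<Sum>l'<d. \<Sum>j<d. xx j * c j l' * X l' l)" by (rule sum.swap)
            also have "\<dots> = (\<Sum>l'<d. (\<Sum>j<d. xx j * c j l') * X l' l)"
              by (simp add: sum_distrib_right)
            finally show ?thesis .
          qed
          thus ?thesis unfolding H_def y_def by auto
        qed
        define P where "P a l = pt (U a) l" for a l
        define E where "E a l = z a l - P a l" for a l
        have Pdiff: "P k l - P (fs d) l = (\<Sum>j<d. xx j * (P (fs j) l - P (fs d) l))" for l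
        proof -
          have pd: "P a l - P b' l = (\<Sum>i<d. (U a i - U b' i) * v i l)" for a b'
            by (simp add: P_def pt_def sum_subtractf[symmetric] left_diff_distrib)
          have "P k l - P (fs d) l = (\<Sum>i<d. (\<Sum>j<d. xx j * (U (fs j) i - U (fs d) i)) * v i l)"
            unfolding pd using lin by (intro sum.cong) auto
          also have "\<dots> = (\<Sum>i<d. \<Sum>j<d. xx j * ((U (fs j) i - U (fs d) i) * v i l))"
            by (simp add: sum_distrib_right mult.assoc)
          also have "\<dots> = (\<Sum>j<d. \<Sum>i<d. xx j * ((U (fs j) i - U (fs d) i) * v i l))" by (rule sum.swap)
          also have "\<dots> = (\<Sum>j<d. xx j * (P (fs j) l - P (fs d) l))"
            unfolding pd by (simp add: sum_distrib_left)
          finally show ?thesis .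
        qed
        have key: "z k l - y l = E k l - E (fs d) l - (\<Sum>j<d. xx j * (E (fs j) l - E (fs d) l))" for l
        proof -
          have "(\<Sum>j<d. xx j * (E (fs j) l - E (fs d) l))
              = (\<Sum>j<d. xx j * w j l - xx j * (P (fs j) l - P (fs d) l))"
            by (rule sum.cong) (auto simp: E_def w_def algebra_simps)
          also have "\<dots> = (\<Sum>j<d. xx j * w j l) - (\<Sum>j<d. xx j * (P (fs j) l - P (fs d) l))"
            by (rule sum_subtractf)
          finally show ?thesis using Pdiff[of l] by (simp add: E_def y_def algebra_simps)
        qed
        have EL: "L2_set (E a) {..<D} < \<eta>" if "a \<in> {1..m}" for a
        proof -
          have "E a = (\<lambda>i. z a i - pt (U a) i)" by (simp add: E_def P_def fun_eq_iff)
          thus ?thesis using UT[OF that] edL2 by simp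
        qed
        have "edist D (z k) y = L2_set (\<lambda>l. E k l - E (fs d) l - (\<Sum>j<d. xx j * (E (fs j) l - E (fs d) l))) {..<D}"
          using edL2 key by simp
        also have "\<dots> \<le> L2_set (E k) {..<D} + L2_set (E (fs d)) {..<D}
             + (\<Sum>j<d. \<bar>xx j\<bar> * (L2_set (E (fs j)) {..<D} + L2_set (E (fs d)) {..<D}))"
          by (rule L2_combo)
        also have "(\<Sum>j<d. \<bar>xx j\<bar> * (L2_set (E (fs j)) {..<D} + L2_set (E (fs d)) {..<D})) \<le> (\<Sum>j<d. 1 * (2 * \<eta>))"
        proof (rule sum_mono)
          fix j assume "j \<in> {..<d}"
          hence j: "j < d" by simp
          have "L2_set (E (fs j)) {..<D} + L2_set (E (fs d)) {..<D} \<le> 2 * \<eta>"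
            using EL[OF fs_range] j by (smt (verit) atLeastAtMost_iff le_refl less_imp_le_nat zero_le)
          thus "\<bar>xx j\<bar> * (L2_set (E (fs j)) {..<D} + L2_set (E (fs d)) {..<D}) \<le> 1 * (2 * \<eta>)"
            using xb[OF j] eta by (intro mult_mono) (auto simp: xx_def)
        qed
        also have "L2_set (E k) {..<D} + L2_set (E (fs d)) {..<D} + (\<Sum>j<d. 1 * (2 * \<eta>)) < C * \<eta>"
        proof -
          have "L2_set (E k) {..<D} < \<eta>" "L2_set (E (fs d)) {..<D} < \<eta>" using EL k fs_range by auto
          moreover have "(\<Sum>j<d. 1 * (2 * \<eta>)) = 2 * real d * \<eta>" by simp
          ultimately show ?thesis using eta by (simp add: C_def algebra_simps)
        qed
        finally have "edist D (z k) y < C * \<eta>" by simp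
        then show ?thesis using nb zRD[OF k] yH by blast
      qed
    qed
  qed
qed

end
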